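(* Let $f(t)$ be a solution of the kinetic Kuramoto model for non-identical oscillators with coupling $K>0$ and initial datum $f_0$ with $\int\omega^2 g(\omega)d\omega<\infty$. Then the functional $$\mathcal H_f(t)=\int_{[-\pi,\pi)\times\mathbb R}\Theta(t,\vartheta,\omega)\,\omega\,f_0(\vartheta,\omega)\,d\vartheta\,d\omega+K\frac{R(t)^2}{2}$$ is non-decreasing in $t$.
   Context: Kinetic Kuramoto model for non-identical oscillators: $f(t)$ is a probability measure on $\mathcal T\times\mathbb R$, $\mathcal T=\mathbb R/2\pi\mathbb Z$, given via characteristics $\dot\Theta(t,\vartheta,\omega)=\omega-KR(t)\sin(\Theta(t,\vartheta,\omega)-\varphi(t))$, $\Theta(0,\vartheta,\omega)=\vartheta$ (real-valued, with $\vartheta\in[-\pi,\pi)$), $R(t)e^{\mathrm{i}\varphi(t)}=\int e^{\mathrm{i}\vartheta}f(t,\vartheta,\omega)d\vartheta d\omega$, and $f(t)$ is the push-forward of $f_0$ by $(\vartheta,\omega)\mapsto(\Theta(t,\vartheta,\omega),\omega)$. $g$ is the $\omega$-marginal of $f_0$. *)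

theory Defs
  imports "HOL-Probability.Probability"
begin

text \<open>The initial datum f0 is a probability measure M on pairs (vartheta, omega) in R x R
  (Borel sets), concentrated on [-pi,pi) x R.  The characteristics are
  Theta :: time => vartheta => omega => real.\<close>

definition order_parameter ::
  "(real \<times> real) measure \<Rightarrow> (real \<Rightarrow> real \<Rightarrow> real \<Rightarrow> real) \<Rightarrow> real \<Rightarrow> complex" where
  "order_parameter M \<Theta> t = (\<integral>x. cis (\<Theta> t (fst x) (snd x)) \<partial>M)"

definition kuramoto_solution ::
  "real \<Rightarrow> (real \<times> real) measure \<Rightarrow> (real \<Rightarrow> real \<Rightarrow> real \<Rightarrow> real)
     \<Rightarrow> (real \<Rightarrow> real) \<Rightarrow> (real \<Rightarrow> real) \<Rightarrow> bool" where
  "kuramoto_solution K M \<Theta> R \<phi> \<longleftrightarrow>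
     (\<forall>\<theta>0 \<omega>. \<Theta> 0 \<theta>0 \<omega> = \<theta>0) \<and>
     (\<forall>\<theta>0 \<omega> t. t \<ge> 0 \<longrightarrow>
        ((\<lambda>s. \<Theta> s \<theta>0 \<omega>) has_real_derivative
            (\<omega> - K * R t * sin (\<Theta> t \<theta>0 \<omega> - \<phi> t))) (at t within {0..})) \<and>
     (\<forall>t\<ge>0. (\<lambda>x. \<Theta> t (fst x) (snd x)) \<in> borel_measurable M) \<and>
     (\<forall>t\<ge>0. R t \<ge> 0 \<and> complex_of_real (R t) * cis (\<phi> t) = order_parameter M \<Theta> t)"

definition kuramoto_H ::
  "real \<Rightarrow> (real \<times> real) measure \<Rightarrow> (real \<Rightarrow> real \<Rightarrow> real \<Rightarrow> real)
     \<Rightarrow> (real \<Rightarrow> real) \<Rightarrow> real \<Rightarrow> real" where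
  "kuramoto_H K M \<Theta> R t =
     (\<integral>x. \<Theta> t (fst x) (snd x) * snd x \<partial>M) + K * (R t)\<^sup>2 / 2"

end

theory Submission
  imports Defs
begin

lemma deriv_integral:
  fixes F :: "real \<Rightarrow> 'a \<Rightarrow> real"
  assumes t: "t \<in> S"
    and int: "\<And>s. s \<in> S \<Longrightarrow> integrable M (F s)"
    and der: "\<And>x. x \<in> space M \<Longrightarrow> ((\<lambda>s. F s x) has_real_derivative F' x) (at t within S)"
    and bnd: "\<And>s x. s \<in> S \<Longrightarrow> x \<in> space M \<Longrightarrow> \<bar>F s x - F t x\<bar> \<le> \<bar>s - t\<bar> * B x"
    and intB: "integrable M B"
    and mF': "F' \<in> borel_measurable M"
  shows "((\<lambda>s. \<integral>x. F s x \<partial>M) has_real_derivative (\<integral>x. F' x \<partial>M)) (at t within S)"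
proof -
  have "((\<lambda>s. ((\<integral>x. F s x \<partial>M) - (\<integral>x. F t x \<partial>M)) / (s - t)) \<longlongrightarrow> (\<integral>x. F' x \<partial>M)) (at t within S)"
  proof (rule Lim_within_LIMSEQ, intro allI impI)
    fix X assume X: "(\<forall>n. X n \<noteq> t \<and> X n \<in> S) \<and> X \<longlonglongrightarrow> t"
    have eq: "((\<integral>x. F (X n) x \<partial>M) - (\<integral>x. F t x \<partial>M)) / (X n - t)
        = (\<integral>x. (F (X n) x - F t x) / (X n - t) \<partial>M)" for n
      using X int[of "X n"] int[OF t] by simp
    have "(\<lambda>n. \<integral>x. (F (X n) x - F t x) / (X n - t) \<partial>M) \<longlonglongrightarrow> (\<integral>x. F' x \<partial>M)"
    proof (rule integral_dominated_convergence[where w=B])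
      show "F' \<in> borel_measurable M" by fact
      show "(\<lambda>x. (F (X n) x - F t x) / (X n - t)) \<in> borel_measurable M" for n
        using int X t by auto
      show "integrable M B" by fact
      show "AE x in M. (\<lambda>n. (F (X n) x - F t x) / (X n - t)) \<longlonglongrightarrow> F' x"
      proof (rule AE_I2)
        fix x assume x: "x \<in> space M"
        from der[OF x] have "((\<lambda>s. (F s x - F t x)/(s - t)) \<longlongrightarrow> F' x) (at t within S)"
          by (simp add: has_field_derivative_iff)
        then show "(\<lambda>n. (F (X n) x - F t x) / (X n - t)) \<longlonglongrightarrow> F' x"
          using X unfolding tendsto_at_iff_sequentially comp_def by auto
      qed
      show "AE x in M. norm ((F (X n) x - F t x) / (X n - t)) \<le> B x" for n
      proof (rule AE_I2)
        fix x assume x: "x \<in> space M"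
        have "\<bar>F (X n) x - F t x\<bar> \<le> \<bar>X n - t\<bar> * B x" using bnd X x by auto
        moreover have "\<bar>X n - t\<bar> > 0" using X by auto
        ultimately show "norm ((F (X n) x - F t x) / (X n - t)) \<le> B x"
          by (simp add: abs_divide pos_divide_le_eq mult.commute)
      qed
    qed
    moreover have "(\<lambda>n. ((\<integral>x. F (X n) x \<partial>M) - (\<integral>x. F t x \<partial>M)) / (X n - t))
       = (\<lambda>n. \<integral>x. (F (X n) x - F t x) / (X n - t) \<partial>M)" using eq by presburger
    ultimately show "(\<lambda>n. ((\<integral>x. F (X n) x \<partial>M) - (\<integral>x. F t x \<partial>M)) / (X n - t)) \<longlonglongrightarrow> (\<integral>x. F' x \<partial>M)"
      by simp
  qed
  then show ?thesis by (simp add: has_field_derivative_iff)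
qed

lemma cos_lip: "\<bar>cos (a::real) - cos b\<bar> \<le> \<bar>a - b\<bar>"
proof -
  have "norm (cos a - cos b) \<le> 1 * norm (a - b)"
    by (rule field_differentiable_bound[where S=UNIV and f'="\<lambda>z. - sin z"])
       (auto intro!: derivative_eq_intros)
  then show ?thesis by simp
qed

lemma sin_lip: "\<bar>sin (a::real) - sin b\<bar> \<le> \<bar>a - b\<bar>"
proof -
  have "norm (sin a - sin b) \<le> 1 * norm (a - b)"
    by (rule field_differentiable_bound[where S=UNIV and f'="\<lambda>z. cos z"])
       (auto intro!: derivative_eq_intros)
  then show ?thesis by simp
qed

theorem mainTheorem8:
  fixes K :: real and M :: "(real \<times> real) measure"
    and \<Theta> :: "real \<Rightarrow> real \<Rightarrow> real \<Rightarrow> real" and R \<phi> :: "real \<Rightarrow> real"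
  assumes "prob_space M"
    and "sets M = sets borel"
    and "AE x in M. fst x \<in> {-pi..<pi}"
    and "K > 0"
    and "integrable M (\<lambda>x. (snd x)\<^sup>2)"
    and "kuramoto_solution K M \<Theta> R \<phi>"
  shows "mono_on {0..} (kuramoto_H K M \<Theta> R)"
proof -
  interpret prob_space M by fact
  have Kpos: "K > 0" by fact
  have init: "\<And>a b. \<Theta> 0 a b = a" and
    derT: "\<And>a b t. t \<ge> 0 \<Longrightarrow> ((\<lambda>s. \<Theta> s a b) has_real_derivative
            (b - K * R t * sin (\<Theta> t a b - \<phi> t))) (at t within {0..})" and
    measT: "\<And>t. t \<ge> 0 \<Longrightarrow> (\<lambda>x. \<Theta> t (fst x) (snd x)) \<in> borel_measurable M" and
    Rdef: "\<And>t. t \<ge> 0 \<Longrightarrow> R t \<ge> 0 \<and> complex_of_real (R t) * cis (\<phi> t) = order_parameter M \<Theta> t"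
    using assms(6) unfolding kuramoto_solution_def by auto
  have msnd: "snd \<in> borel_measurable M"
  proof -
    have "snd \<in> borel_measurable (borel :: (real \<times> real) measure)"
      by (intro borel_measurable_continuous_onI continuous_intros)
    then show ?thesis unfolding measurable_cong_sets[OF assms(2) refl] .
  qed
  have int2: "integrable M (\<lambda>x. (snd x)\<^sup>2)" by fact
  have int1: "integrable M (\<lambda>x. \<bar>snd x\<bar>)"
  proof -
    have i: "integrable M (\<lambda>x. 1 + (snd x)\<^sup>2 :: real)" using int2 by simp
    have "\<bar>snd x\<bar> \<le> 1 + (snd x)\<^sup>2" for x :: "real \<times> real"
    proof (cases "\<bar>snd x\<bar> \<le> 1")
      case False
      then have "\<bar>snd x\<bar> * 1 \<le> \<bar>snd x\<bar> * \<bar>snd x\<bar>" by (intro mult_left_mono) auto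
      then show ?thesis by (simp add: power2_eq_square)
    qed (smt (verit) zero_le_power2)
    then show ?thesis
      by (intro Bochner_Integration.integrable_bound[OF i]) (use msnd in auto)
  qed
  have Rle1: "R t \<le> 1" if "t \<ge> 0" for t
  proof -
    have "R t \<ge> 0" using Rdef[OF that] by simp
    then have "R t = norm (complex_of_real (R t) * cis (\<phi> t))" by (simp add: norm_mult)
    also have "\<dots> = norm (\<integral>x. cis (\<Theta> t (fst x) (snd x)) \<partial>M)"
      using Rdef[OF that] by (simp add: order_parameter_def)
    also have "\<dots> \<le> (\<integral>x. norm (cis (\<Theta> t (fst x) (snd x))) \<partial>M)" by (rule integral_norm_bound)
    also have "\<dots> = 1" by (simp add: prob_space)
    finally show ?thesis .
  qed
  define D where "D = (\<lambda>t x. snd x - K * R t * sin (\<Theta> t (fst x) (snd x) - \<phi> t))"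
  have Dbound: "\<bar>D t x\<bar> \<le> \<bar>snd x\<bar> + K" if "t \<ge> 0" for t x
  proof -
    have "\<bar>K * R t * sin (\<Theta> t (fst x) (snd x) - \<phi> t)\<bar> = K * R t * \<bar>sin (\<Theta> t (fst x) (snd x) - \<phi> t)\<bar>"
      using Kpos Rdef[OF that] by (simp add: abs_mult)
    also have "\<dots> \<le> K * 1 * 1"
      using Kpos Rdef[OF that] Rle1[OF that] by (intro mult_mono) auto
    finally show ?thesis unfolding D_def by linarith
  qed
  have measD: "D t \<in> borel_measurable M" if "t \<ge> 0" for t
    unfolding D_def using measT[OF that] msnd by measurable
  have lip: "\<bar>\<Theta> s a b - \<Theta> t a b\<bar> \<le> \<bar>s - t\<bar> * (\<bar>b\<bar> + K)" if "s \<ge> 0" "t \<ge> 0" for s t a b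
  proof -
    have "norm (\<Theta> s a b - \<Theta> t a b) \<le> (\<bar>b\<bar> + K) * norm (s - t)"
    proof (rule field_differentiable_bound[where S="{0..}" and f="\<lambda>s. \<Theta> s a b"
          and f'="\<lambda>t. b - K * R t * sin (\<Theta> t a b - \<phi> t)"])
      show "norm (b - K * R z * sin (\<Theta> z a b - \<phi> z)) \<le> \<bar>b\<bar> + K" if "z \<in> {0..}" for z
        using Dbound[of z "(a,b)"] that unfolding D_def by simp
    qed (use that derT in auto)
    then show ?thesis by (simp add: mult.commute)
  qed
  define A where "A = (\<lambda>t. \<integral>x. \<Theta> t (fst x) (snd x) * snd x \<partial>M)"
  define C where "C = (\<lambda>t. \<integral>x. cos (\<Theta> t (fst x) (snd x)) \<partial>M)"
  define S where "S = (\<lambda>t. \<integral>x. sin (\<Theta> t (fst x) (snd x)) \<partial>M)"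
  define G where "G = (\<lambda>t. A t + K * ((C t)\<^sup>2 + (S t)\<^sup>2) / 2)"
  define Ap where "Ap = (\<lambda>t. \<integral>x. D t x * snd x \<partial>M)"
  define Cp where "Cp = (\<lambda>t. \<integral>x. - sin (\<Theta> t (fst x) (snd x)) * D t x \<partial>M)"
  define Sp where "Sp = (\<lambda>t. \<integral>x. cos (\<Theta> t (fst x) (snd x)) * D t x \<partial>M)"
  have intB1: "integrable M (\<lambda>x. \<bar>snd x\<bar> + K)" using int1 by simp
  have intB2: "integrable M (\<lambda>x. (\<bar>snd x\<bar> + K) * \<bar>snd x\<bar>)"
  proof -
    have e: "(\<lambda>x. (\<bar>snd x\<bar> + K) * \<bar>snd x\<bar>) = (\<lambda>x. (snd x)\<^sup>2 + K * \<bar>snd x\<bar>)"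
      by (auto simp: power2_eq_square algebra_simps)
    show ?thesis unfolding e using int1 int2 by simp
  qed
  have intA: "integrable M (\<lambda>x. \<Theta> t (fst x) (snd x) * snd x)" if t: "t \<ge> 0" for t
  proof -
    have i: "integrable M (\<lambda>x. pi * \<bar>snd x\<bar> + t * ((\<bar>snd x\<bar> + K) * \<bar>snd x\<bar>))"
      using int1 intB2 by simp
    show ?thesis
    proof (rule Bochner_Integration.integrable_bound[OF i])
      show "(\<lambda>x. \<Theta> t (fst x) (snd x) * snd x) \<in> borel_measurable M"
        using measT[OF t] msnd by measurable
      show "AE x in M. norm (\<Theta> t (fst x) (snd x) * snd x) \<le>
          norm (pi * \<bar>snd x\<bar> + t * ((\<bar>snd x\<bar> + K) * \<bar>snd x\<bar>))"
        using assms(3)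
      proof (rule AE_mp, intro AE_I2 impI)
        fix x :: "real \<times> real" assume x: "fst x \<in> {-pi..<pi}"
        have "\<bar>\<Theta> t (fst x) (snd x) - \<Theta> 0 (fst x) (snd x)\<bar> \<le> \<bar>t - 0\<bar> * (\<bar>snd x\<bar> + K)"
          using lip[of t 0] t by simp
        then have "\<bar>\<Theta> t (fst x) (snd x)\<bar> \<le> pi + t * (\<bar>snd x\<bar> + K)"
          using x t init[of "fst x" "snd x"] by auto
        then have "\<bar>\<Theta> t (fst x) (snd x)\<bar> * \<bar>snd x\<bar> \<le> (pi + t * (\<bar>snd x\<bar> + K)) * \<bar>snd x\<bar>"
          by (intro mult_right_mono) auto
        moreover have "0 \<le> pi * \<bar>snd x\<bar> + t * ((\<bar>snd x\<bar> + K) * \<bar>snd x\<bar>)"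
          using t Kpos by (intro add_nonneg_nonneg mult_nonneg_nonneg) auto
        ultimately show "norm (\<Theta> t (fst x) (snd x) * snd x) \<le>
          norm (pi * \<bar>snd x\<bar> + t * ((\<bar>snd x\<bar> + K) * \<bar>snd x\<bar>))"
          by (simp add: abs_mult algebra_simps)
      qed
    qed
  qed
  have intcos: "integrable M (\<lambda>x. cos (\<Theta> t (fst x) (snd x)))" if t: "t \<ge> 0" for t
    by (rule integrable_const_bound[where B=1]) (use measT[OF t] in auto)
  have intsin: "integrable M (\<lambda>x. sin (\<Theta> t (fst x) (snd x)))" if t: "t \<ge> 0" for t
    by (rule integrable_const_bound[where B=1]) (use measT[OF t] in auto)
  have mcis: "(cis :: real \<Rightarrow> complex) \<in> borel_measurable borel"
    by (intro borel_measurable_continuous_onI continuous_intros)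
  have intcis: "integrable M (\<lambda>x. cis (\<Theta> t (fst x) (snd x)))" if t: "t \<ge> 0" for t
    by (rule integrable_const_bound[where B=1]) (use measurable_compose[OF measT[OF t] mcis] in auto)
  have iDw: "integrable M (\<lambda>x. D t x * snd x)" if t: "t \<ge> 0" for t
  proof (rule Bochner_Integration.integrable_bound[OF intB2])
    show "(\<lambda>x. D t x * snd x) \<in> borel_measurable M" using measD[OF t] msnd by measurable
    show "AE x in M. norm (D t x * snd x) \<le> norm ((\<bar>snd x\<bar> + K) * \<bar>snd x\<bar>)"
      using Dbound[OF t] Kpos by (auto simp: abs_mult intro!: mult_right_mono)
  qed
  have iSD: "integrable M (\<lambda>x. sin (\<Theta> t (fst x) (snd x)) * D t x)" if t: "t \<ge> 0" for t
  proof (rule Bochner_Integration.integrable_bound[OF intB1])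
    show "(\<lambda>x. sin (\<Theta> t (fst x) (snd x)) * D t x) \<in> borel_measurable M"
      using measD[OF t] measT[OF t] by measurable
    show "AE x in M. norm (sin (\<Theta> t (fst x) (snd x)) * D t x) \<le> norm (\<bar>snd x\<bar> + K)"
    proof (rule AE_I2)
      fix x
      have "\<bar>sin (\<Theta> t (fst x) (snd x))\<bar> * \<bar>D t x\<bar> \<le> 1 * (\<bar>snd x\<bar> + K)"
        using Dbound[OF t] by (intro mult_mono) auto
      then show "norm (sin (\<Theta> t (fst x) (snd x)) * D t x) \<le> norm (\<bar>snd x\<bar> + K)"
        using Kpos by (simp add: abs_mult)
    qed
  qed
  have iCD: "integrable M (\<lambda>x. cos (\<Theta> t (fst x) (snd x)) * D t x)" if t: "t \<ge> 0" for t
  proof (rule Bochner_Integration.integrable_bound[OF intB1])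
    show "(\<lambda>x. cos (\<Theta> t (fst x) (snd x)) * D t x) \<in> borel_measurable M"
      using measD[OF t] measT[OF t] by measurable
    show "AE x in M. norm (cos (\<Theta> t (fst x) (snd x)) * D t x) \<le> norm (\<bar>snd x\<bar> + K)"
    proof (rule AE_I2)
      fix x
      have "\<bar>cos (\<Theta> t (fst x) (snd x))\<bar> * \<bar>D t x\<bar> \<le> 1 * (\<bar>snd x\<bar> + K)"
        using Dbound[OF t] by (intro mult_mono) auto
      then show "norm (cos (\<Theta> t (fst x) (snd x)) * D t x) \<le> norm (\<bar>snd x\<bar> + K)"
        using Kpos by (simp add: abs_mult)
    qed
  qed
  have dA: "(A has_real_derivative Ap t) (at t within {0..})" if t: "t \<ge> 0" for t
    unfolding A_def Ap_def
  proof (rule deriv_integral[where B="\<lambda>x. (\<bar>snd x\<bar> + K) * \<bar>snd x\<bar>"])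
    show "((\<lambda>s. \<Theta> s (fst x) (snd x) * snd x) has_real_derivative D t x * snd x) (at t within {0..})" for x
      unfolding D_def by (rule DERIV_cmult_right[OF derT[OF t]])
    show "\<bar>\<Theta> s (fst x) (snd x) * snd x - \<Theta> t (fst x) (snd x) * snd x\<bar>
        \<le> \<bar>s - t\<bar> * ((\<bar>snd x\<bar> + K) * \<bar>snd x\<bar>)" if s: "s \<in> {0..}" for s x
    proof -
      have "\<bar>\<Theta> s (fst x) (snd x) - \<Theta> t (fst x) (snd x)\<bar> * \<bar>snd x\<bar> \<le> \<bar>s - t\<bar> * (\<bar>snd x\<bar> + K) * \<bar>snd x\<bar>"
        using lip[of s t] s t by (intro mult_right_mono) auto
      then show ?thesis by (simp add: abs_mult left_diff_distrib[symmetric] mult.assoc)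
    qed
    show "(\<lambda>x. D t x * snd x) \<in> borel_measurable M" using iDw[OF t] by auto
  qed (use t intA intB2 in auto)
  have dC: "(C has_real_derivative Cp t) (at t within {0..})" if t: "t \<ge> 0" for t
    unfolding C_def Cp_def
  proof (rule deriv_integral[where B="\<lambda>x. \<bar>snd x\<bar> + K"])
    show "((\<lambda>s. cos (\<Theta> s (fst x) (snd x))) has_real_derivative - sin (\<Theta> t (fst x) (snd x)) * D t x) (at t within {0..})" for x
      unfolding D_def by (rule DERIV_chain2[OF DERIV_cos derT[OF t]])
    show "\<bar>cos (\<Theta> s (fst x) (snd x)) - cos (\<Theta> t (fst x) (snd x))\<bar> \<le> \<bar>s - t\<bar> * (\<bar>snd x\<bar> + K)"
      if s: "s \<in> {0..}" for s x
      using order_trans[OF cos_lip[of "\<Theta> s (fst x) (snd x)" "\<Theta> t (fst x) (snd x)"] lip[of s t "fst x" "snd x"]] s t by auto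
    show "(\<lambda>x. - sin (\<Theta> t (fst x) (snd x)) * D t x) \<in> borel_measurable M" using iSD[OF t] by auto
  qed (use t intcos intB1 in auto)
  have dS: "(S has_real_derivative Sp t) (at t within {0..})" if t: "t \<ge> 0" for t
    unfolding S_def Sp_def
  proof (rule deriv_integral[where B="\<lambda>x. \<bar>snd x\<bar> + K"])
    show "((\<lambda>s. sin (\<Theta> s (fst x) (snd x))) has_real_derivative cos (\<Theta> t (fst x) (snd x)) * D t x) (at t within {0..})" for x
      unfolding D_def by (rule DERIV_chain2[OF DERIV_sin derT[OF t]])
    show "\<bar>sin (\<Theta> s (fst x) (snd x)) - sin (\<Theta> t (fst x) (snd x))\<bar> \<le> \<bar>s - t\<bar> * (\<bar>snd x\<bar> + K)"
      if s: "s \<in> {0..}" for s x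
      using order_trans[OF sin_lip[of "\<Theta> s (fst x) (snd x)" "\<Theta> t (fst x) (snd x)"] lip[of s t "fst x" "snd x"]] s t by auto
    show "(\<lambda>x. cos (\<Theta> t (fst x) (snd x)) * D t x) \<in> borel_measurable M" using iCD[OF t] by auto
  qed (use t intsin intB1 in auto)
  have dG: "(G has_real_derivative Ap t + K * (2 * C t * Cp t + 2 * S t * Sp t) / 2) (at t within {0..})"
    if t: "t \<ge> 0" for t
  proof -
    have dCC: "((\<lambda>s. C s * C s) has_real_derivative Cp t * C t + Cp t * C t) (at t within {0..})"
      by (rule DERIV_mult[OF dC[OF t] dC[OF t]])
    have dSS: "((\<lambda>s. S s * S s) has_real_derivative Sp t * S t + Sp t * S t) (at t within {0..})"
      by (rule DERIV_mult[OF dS[OF t] dS[OF t]])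
    have "((\<lambda>s. A s + K * (C s * C s + S s * S s) / 2) has_real_derivative
        Ap t + K * ((Cp t * C t + Cp t * C t) + (Sp t * S t + Sp t * S t)) / 2) (at t within {0..})"
      by (rule DERIV_add[OF dA[OF t] DERIV_cdivide[OF DERIV_cmult[OF DERIV_add[OF dCC dSS]]]])
    moreover have "Ap t + K * ((Cp t * C t + Cp t * C t) + (Sp t * S t + Sp t * S t)) / 2
        = Ap t + K * (2 * C t * Cp t + 2 * S t * Sp t) / 2" by (simp add: algebra_simps)
    ultimately have "((\<lambda>s. A s + K * ((C s)\<^sup>2 + (S s)\<^sup>2) / 2) has_real_derivative
        Ap t + K * (2 * C t * Cp t + 2 * S t * Sp t) / 2) (at t within {0..})"
      by (simp add: power2_eq_square mult.assoc)
    then show ?thesis unfolding G_def .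
  qed
  have CR: "C t = R t * cos (\<phi> t)" and SR: "S t = R t * sin (\<phi> t)" if t: "t \<ge> 0" for t
  proof -
    have e: "complex_of_real (R t) * cis (\<phi> t) = (\<integral>x. cis (\<Theta> t (fst x) (snd x)) \<partial>M)"
      using Rdef[OF t] by (simp add: order_parameter_def)
    have "R t * cos (\<phi> t) = Re (\<integral>x. cis (\<Theta> t (fst x) (snd x)) \<partial>M)"
      using arg_cong[OF e, of Re] by simp
    also have "\<dots> = C t" unfolding C_def using integral_Re[OF intcis[OF t]] by simp
    finally show "C t = R t * cos (\<phi> t)" by simp
    have "R t * sin (\<phi> t) = Im (\<integral>x. cis (\<Theta> t (fst x) (snd x)) \<partial>M)"
      using arg_cong[OF e, of Im] by simp
    also have "\<dots> = S t" unfolding S_def using integral_Im[OF intcis[OF t]] by simp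
    finally show "S t = R t * sin (\<phi> t)" by simp
  qed
  have Gp_nonneg: "0 \<le> Ap t + K * (2 * C t * Cp t + 2 * S t * Sp t) / 2" if t: "t \<ge> 0" for t
  proof -
    have alg: "d\<^sup>2 = d * w - K * r * a * (s * d) + K * r * b * (c * d)"
      if h: "d = w - K * r * (s * a - c * b)" for d w r s c a b :: real
    proof -
      have "d\<^sup>2 = d * d" by (simp add: power2_eq_square)
      also have "\<dots> = d * (w - K * r * (s * a - c * b))" by (subst (2) h) (rule refl)
      finally show ?thesis by (simp add: algebra_simps)
    qed
    have pw: "(D t x)\<^sup>2 = D t x * snd x - K * R t * cos (\<phi> t) * (sin (\<Theta> t (fst x) (snd x)) * D t x)
        + K * R t * sin (\<phi> t) * (cos (\<Theta> t (fst x) (snd x)) * D t x)" for x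
      by (rule alg) (simp add: D_def sin_diff)
    have "(\<integral>x. (D t x)\<^sup>2 \<partial>M) = (\<integral>x. D t x * snd x - K * R t * cos (\<phi> t) * (sin (\<Theta> t (fst x) (snd x)) * D t x)
        + K * R t * sin (\<phi> t) * (cos (\<Theta> t (fst x) (snd x)) * D t x) \<partial>M)"
      by (simp only: pw)
    also have "\<dots> = (\<integral>x. D t x * snd x \<partial>M) - K * R t * cos (\<phi> t) * (\<integral>x. sin (\<Theta> t (fst x) (snd x)) * D t x \<partial>M)
        + K * R t * sin (\<phi> t) * (\<integral>x. cos (\<Theta> t (fst x) (snd x)) * D t x \<partial>M)"
    proof -
      have i2: "integrable M (\<lambda>x. K * R t * cos (\<phi> t) * (sin (\<Theta> t (fst x) (snd x)) * D t x))"
        using iSD[OF t] by simp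
      have i3: "integrable M (\<lambda>x. K * R t * sin (\<phi> t) * (cos (\<Theta> t (fst x) (snd x)) * D t x))"
        using iCD[OF t] by simp
      show ?thesis
        apply (subst Bochner_Integration.integral_add[OF Bochner_Integration.integrable_diff[OF iDw[OF t] i2] i3])
        apply (subst Bochner_Integration.integral_diff[OF iDw[OF t] i2])
        apply (simp only: integral_mult_right_zero)
        done
    qed
    also have "\<dots> = Ap t + K * (C t * Cp t + S t * Sp t)"
      unfolding Ap_def Cp_def Sp_def CR[OF t] SR[OF t] by (simp add: algebra_simps)
    finally have "Ap t + K * (C t * Cp t + S t * Sp t) \<ge> 0" by (metis integral_nonneg_AE AE_I2 zero_le_power2)
    moreover have "K * (2 * C t * Cp t + 2 * S t * Sp t) / 2 = K * (C t * Cp t + S t * Sp t)"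
      by (simp add: field_simps)
    ultimately show ?thesis by linarith
  qed
  have HG: "kuramoto_H K M \<Theta> R t = G t" if t: "t \<ge> 0" for t
  proof -
    have "(R t)\<^sup>2 = (C t)\<^sup>2 + (S t)\<^sup>2"
      unfolding CR[OF t] SR[OF t] power_mult_distrib
      by (metis distrib_left mult.right_neutral sin_cos_squared_add add.commute)
    then show ?thesis unfolding kuramoto_H_def G_def A_def by simp
  qed
  have contG: "continuous_on {0..} G"
    unfolding continuous_on_eq_continuous_within
    using dG by (auto intro: DERIV_continuous)
  show ?thesis
  proof (rule mono_onI)
    fix a b :: real assume ab: "a \<in> {0..}" "b \<in> {0..}" "a \<le> b"
    have "G a \<le> G b"
    proof (rule DERIV_nonneg_imp_increasing_open[OF ab(3)])
      fix x assume x: "a < x" "x < b"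
      then have x0: "x \<in> interior {0..}" using ab by auto
      show "\<exists>y. DERIV G x :> y \<and> y \<ge> 0"
        using dG[of x] Gp_nonneg[of x] x ab at_within_interior[OF x0] by auto
    next
      show "continuous_on {a..b} G" by (rule continuous_on_subset[OF contG]) (use ab in auto)
    qed
    then show "kuramoto_H K M \<Theta> R a \<le> kuramoto_H K M \<Theta> R b" using HG ab by simp
  qed
qed

end
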